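(* There is a universal constant $C$ such that the following holds. Let $u$ be a continuous function on $[0,1]\times[-1,1]^3$ which is $C^1$ in $t$ and $C^2$ in $x$ on $(0,1]\times(-1,1)^3$, and suppose that pointwise on $(0,1]\times(-1,1)^3$ $$(\partial_t-\Delta)u=-u^3+g(u,z),$$ where $g$ is a bounded function with $\|g\|:=\sup|g|$. Then for all $(t,x)\in(0,1]\times(-1,1)^3$, $x=(x_1,x_2,x_3)$, $$|u(t,x)|\le C\max\Big\{\frac{1}{\min\{\sqrt t,\,1-x_i,\,1+x_i,\ i=1,2,3\}},\ \|g\|^{1/3}\Big\}.$$ *)

theory Defs
  imports "HOL-Analysis.Analysis"
begin

definition open_cube :: "(real^3) set" where
  "open_cube = {x. \<forall>i. -1 < x$i \<and> x$i < 1}"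

definition closed_cube :: "(real^3) set" where
  "closed_cube = {x. \<forall>i. -1 \<le> x$i \<and> x$i \<le> 1}"

definition par_dom :: "(real \<times> (real^3)) set" where
  "par_dom = {0<..1} \<times> open_cube"

definition is_sol ::
  "(real \<Rightarrow> real^3 \<Rightarrow> real) \<Rightarrow> (real \<Rightarrow> real^3 \<Rightarrow> real) \<Rightarrow>
   (real \<Rightarrow> real^3 \<Rightarrow> real^3) \<Rightarrow> (real \<Rightarrow> real^3 \<Rightarrow> real^3^3) \<Rightarrow>
   (real \<Rightarrow> real \<Rightarrow> real^3 \<Rightarrow> real) \<Rightarrow> bool" where
  "is_sol u ut Du D2u g \<longleftrightarrow>
     continuous_on ({0..1} \<times> closed_cube) (\<lambda>(t,x). u t x) \<and>
     continuous_on par_dom (\<lambda>(t,x). ut t x) \<and>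
     continuous_on par_dom (\<lambda>(t,x). Du t x) \<and>
     continuous_on par_dom (\<lambda>(t,x). D2u t x) \<and>
     (\<forall>(t,x)\<in>par_dom.
        ((\<lambda>s. u s x) has_real_derivative ut t x) (at t within {0<..1}) \<and>
        ((\<lambda>y. u t y) has_derivative (\<lambda>h. Du t x \<bullet> h)) (at x) \<and>
        ((\<lambda>y. Du t y) has_derivative (\<lambda>h. D2u t x *v h)) (at x) \<and>
        ut t x - (\<Sum>i\<in>UNIV. D2u t x $ i $ i) = - ((u t x) ^ 3) + g (u t x) t x)"

definition gnorm :: "(real \<Rightarrow> real \<Rightarrow> real^3 \<Rightarrow> real) \<Rightarrow> real" where
  "gnorm g = (SUP p. \<bar>g (fst p) (fst (snd p)) (snd (snd p))\<bar>)"

definition g_bounded :: "(real \<Rightarrow> real \<Rightarrow> real^3 \<Rightarrow> real) \<Rightarrow> bool" where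
  "g_bounded g \<longleftrightarrow> (\<exists>M. \<forall>a t x. \<bar>g a t x\<bar> \<le> M)"

definition pdist :: "real \<Rightarrow> real^3 \<Rightarrow> real" where
  "pdist t x = Min (insert (sqrt t) ((\<lambda>i. 1 - x$i) ` UNIV \<union> (\<lambda>i. 1 + x$i) ` UNIV))"

end

theory Submission
  imports Defs
begin


lemma time_lemma:
  fixes f :: "real \<Rightarrow> real"
  assumes d: "(f has_real_derivative D) (at t within {0<..1})"
    and t: "0 < t" "t \<le> 1" and mx: "\<forall>s. 0 < s \<and> s \<le> 1 \<longrightarrow> f s \<le> f t"
  shows "0 \<le> D"
proof (rule ccontr)
  assume "\<not> 0 \<le> D"
  then have "D < 0" by simp
  from has_real_derivative_neg_dec_left[OF d this] obtain d where
    d0: "d > 0" and dd: "\<forall>h>0. t - h \<in> {0<..1} \<longrightarrow> h < d \<longrightarrow> f t < f (t - h)" by blast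
  define h where "h = min d t / 2"
  have "h > 0" "h < d" "t - h \<in> {0<..1}" using d0 t by (auto simp: h_def)
  with dd have "f t < f (t - h)" by blast
  moreover have "f (t - h) \<le> f t" using mx \<open>t - h \<in> {0<..1}\<close> by auto
  ultimately show False by simp
qed

lemma second_lemma:
  fixes \<phi> \<phi>' :: "real \<Rightarrow> real"
  assumes r: "r > 0"
    and d1: "\<And>s. \<bar>s\<bar> < r \<Longrightarrow> (\<phi> has_real_derivative \<phi>' s) (at s)"
    and d2: "(\<phi>' has_real_derivative D) (at 0)"
    and mx: "\<And>s. \<bar>s\<bar> < r \<Longrightarrow> \<phi> s \<le> \<phi> 0"
  shows "D \<le> 0"
proof (rule ccontr)
  assume "\<not> D \<le> 0"
  then have D: "D > 0" by simp
  have z: "\<phi>' 0 = 0"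
    by (rule DERIV_local_max[OF d1[of 0] r]) (use r mx in auto)
  from DERIV_pos_inc_right[OF d2 D] obtain d where
    d0: "d > 0" and dd: "\<forall>h>0. h < d \<longrightarrow> \<phi>' 0 < \<phi>' (0 + h)" by blast
  define s where "s = min d r / 2"
  have s: "0 < s" "s < d" "s < r" using d0 r by (auto simp: s_def)
  have "\<phi> 0 < \<phi> s"
  proof (rule DERIV_pos_imp_increasing_open[OF s(1)])
    fix y assume y: "0 < y" "y < s"
    then have "\<bar>y\<bar> < r" using s by auto
    moreover have "\<phi>' y > 0" using dd y s z by force
    ultimately show "\<exists>z. DERIV \<phi> y :> z \<and> z > 0" using d1 by blast
  next
    show "continuous_on {0..s} \<phi>"
    proof (rule continuous_at_imp_continuous_on, rule ballI)
      fix y assume "y \<in> {0..s}"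
      then have "\<bar>y\<bar> < r" using s by auto
      from DERIV_isCont[OF d1[OF this]] show "isCont \<phi> y" .
    qed
  qed
  moreover have "\<phi> s \<le> \<phi> 0" using mx s by auto
  ultimately show False by simp
qed

definition hh :: "real \<Rightarrow> real" where "hh y = 2/(1-y) + 2/(1+y)"
definition hh1 :: "real \<Rightarrow> real" where "hh1 y = 2/(1-y)^2 - 2/(1+y)^2"
definition hh2 :: "real \<Rightarrow> real" where "hh2 y = 4/(1-y)^3 + 4/(1+y)^3"

lemma hh_deriv: "-1 < y \<Longrightarrow> y < 1 \<Longrightarrow> (hh has_real_derivative hh1 y) (at y)"
  unfolding hh_def hh1_def
  apply (rule derivative_eq_intros refl | simp)+
  apply (simp add: field_simps power2_eq_square)
  done

lemma hh1_deriv: "-1 < y \<Longrightarrow> y < 1 \<Longrightarrow> (hh1 has_real_derivative hh2 y) (at y)"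
  unfolding hh2_def hh1_def
  apply (rule derivative_eq_intros refl | simp)+
  apply (subgoal_tac "1 - y \<noteq> 0 \<and> 1 + y \<noteq> 0")
   apply (simp add: divide_simps)
   apply (simp add: algebra_simps power2_eq_square power3_eq_cube power4_eq_xxxx)
  apply simp
  done

lemma sqrt_deriv: "0 < t \<Longrightarrow> ((\<lambda>s. 2 / sqrt s) has_real_derivative (- 1/(t * sqrt t))) (at t)"
  apply (rule derivative_eq_intros refl | simp)+
  apply (simp add: field_simps)
  done


lemma cube_sup: "0 \<le> (a::real) \<Longrightarrow> 0 \<le> c \<Longrightarrow> a^3 + c^3 \<le> (a+c)^3"
  by (simp add: power3_eq_cube algebra_simps)

lemma sum_cube: "finite A \<Longrightarrow> (\<forall>i\<in>A. 0 \<le> f i) \<Longrightarrow> (\<Sum>i\<in>A. (f i :: real)^3) \<le> (\<Sum>i\<in>A. f i)^3"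
proof (induction A rule: finite_induct)
  case empty then show ?case by simp
next
  case (insert a A)
  have "0 \<le> (\<Sum>i\<in>A. f i)" using insert by (simp add: sum_nonneg)
  then have "f a ^3 + (\<Sum>i\<in>A. f i)^3 \<le> (f a + (\<Sum>i\<in>A. f i))^3"
    using insert by (intro cube_sup) auto
  then show ?case using insert by auto
qed

lemma hh_facts:
  assumes "-1 < y" "y < 1"
  shows "2/(1-y) \<le> hh y" "2/(1+y) \<le> hh y" "0 < hh y" "hh2 y \<le> (hh y)^3"
proof -
  have a: "0 < 2/(1-y)" "0 < 2/(1+y)" using assms by auto
  show "2/(1-y) \<le> hh y" "2/(1+y) \<le> hh y" "0 < hh y" using a unfolding hh_def by linarith+
  have "(2/(1-y))^3 + (2/(1+y))^3 \<le> (hh y)^3"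
    unfolding hh_def using a by (intro cube_sup) auto
  moreover have "hh2 y \<le> (2/(1-y))^3 + (2/(1+y))^3"
  proof -
    have p: "0 < (1-y)^3" "0 < (1+y)^3" using assms by auto
    have "4/(1-y)^3 \<le> 8/(1-y)^3" "4/(1+y)^3 \<le> 8/(1+y)^3"
      using p by (auto intro: divide_right_mono)
    then show ?thesis unfolding hh2_def by (simp add: power_divide)
  qed
  ultimately show "hh2 y \<le> (hh y)^3" by linarith
qed

lemma closed_cube_cbox: "closed_cube = cbox (vec (-1)) (vec 1)"
  by (auto simp: closed_cube_def mem_box_cart)


definition vb :: "real \<Rightarrow> real \<Rightarrow> real^3 \<Rightarrow> real" where
  "vb b t x = 2 / sqrt t + (\<Sum>j\<in>UNIV. hh (x$j)) + b"

lemma par_dom_iff: "(t,x) \<in> par_dom \<longleftrightarrow> 0 < t \<and> t \<le> 1 \<and> (\<forall>j. -1 < x$j \<and> x$j < 1)"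
  by (auto simp: par_dom_def open_cube_def)

lemma vb_ge:
  assumes "(t,x) \<in> par_dom" "0 \<le> b"
  shows "2 / sqrt t \<le> vb b t x" "\<And>j. 2/(1 - x$j) \<le> vb b t x" "\<And>j. 2/(1 + x$j) \<le> vb b t x"
    "0 < vb b t x"
proof -
  have x: "\<And>j. -1 < x$j \<and> x$j < 1" and t: "0 < t" using assms par_dom_iff by auto
  have hp: "\<And>j. 0 \<le> hh (x$j)" using hh_facts(3) x by (meson less_le)
  have S: "\<And>j. hh (x$j) \<le> (\<Sum>j\<in>UNIV. hh (x$j))"
    by (rule member_le_sum) (auto simp: hp)
  have S0: "0 \<le> (\<Sum>j\<in>UNIV. hh (x$j))" by (simp add: hp sum_nonneg)
  have st: "0 < 2 / sqrt t" using t by simp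
  show "2 / sqrt t \<le> vb b t x" "0 < vb b t x" using S0 st assms(2) unfolding vb_def by linarith+
  fix j
  show "2/(1 - x$j) \<le> vb b t x" "2/(1 + x$j) \<le> vb b t x"
    using hh_facts(1,2)[of "x$j"] x[of j] S[of j] st assms(2) unfolding vb_def by linarith+
qed


lemma core:
  fixes u ut :: "real \<Rightarrow> real^3 \<Rightarrow> real" and Du :: "real \<Rightarrow> real^3 \<Rightarrow> real^3"
    and D2u :: "real \<Rightarrow> real^3 \<Rightarrow> real^3^3"
  assumes cont: "continuous_on ({0..1} \<times> closed_cube) (\<lambda>(t,x). u t x)"
    and dt: "\<And>t x. (t,x) \<in> par_dom \<Longrightarrow> ((\<lambda>s. u s x) has_real_derivative ut t x) (at t within {0<..1})"
    and dx: "\<And>t x. (t,x) \<in> par_dom \<Longrightarrow> ((\<lambda>y. u t y) has_derivative (\<lambda>h. Du t x \<bullet> h)) (at x)"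
    and dxx: "\<And>t x. (t,x) \<in> par_dom \<Longrightarrow> ((\<lambda>y. Du t y) has_derivative (\<lambda>h. D2u t x *v h)) (at x)"
    and eq: "\<And>t x. (t,x) \<in> par_dom \<Longrightarrow> ut t x - (\<Sum>i\<in>UNIV. D2u t x $ i $ i) \<le> - ((u t x)^3) + b^3"
    and b: "0 \<le> b"
    and p1: "(t1,x1) \<in> par_dom"
  shows "u t1 x1 \<le> vb b t1 x1"
proof (rule ccontr)
  assume "\<not> ?thesis"
  hence gt: "vb b t1 x1 < u t1 x1" by simp
  define w where "w = (\<lambda>p. u (fst p) (snd p) - vb b (fst p) (snd p))"
  have ccompact: "compact ({0..1::real} \<times> closed_cube)"
    by (simp add: closed_cube_cbox compact_Times)
  obtain M where M: "\<And>t x. t\<in>{0..1} \<Longrightarrow> x\<in>closed_cube \<Longrightarrow> \<bar>u t x\<bar> \<le> M"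
  proof -
    have "compact ((\<lambda>(t,x). u t x) ` ({0..1} \<times> closed_cube))"
      by (rule compact_continuous_image[OF cont ccompact])
    then have "bounded ((\<lambda>(t,x). u t x) ` ({0..1} \<times> closed_cube))"
      by (rule compact_imp_bounded)
    then obtain M where "\<forall>y\<in>(\<lambda>(t,x). u t x) ` ({0..1} \<times> closed_cube). \<bar>y\<bar> \<le> M"
      unfolding bounded_real by blast
    then show ?thesis using that by force
  qed
  define M' where "M' = \<bar>M\<bar> + 1"
  have M'pos: "M' > 0" by (simp add: M'_def)
  define \<delta> where "\<delta> = min (1/2) (min (4/M'^2) (2/M'))"
  have \<delta>: "0 < \<delta>" "\<delta> \<le> 1/2" "\<delta> \<le> 4/M'^2" "\<delta> \<le> 2/M'"
    using M'pos by (auto simp: \<delta>_def)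
  define K where "K = {\<delta>..1} \<times> cbox (vec (-1+\<delta>)) (vec (1-\<delta>) :: real^3)"
  have Kiff: "\<And>t x. (t,x) \<in> K \<longleftrightarrow> \<delta> \<le> t \<and> t \<le> 1 \<and> (\<forall>j. -1+\<delta> \<le> x$j \<and> x$j \<le> 1-\<delta>)"
    by (auto simp: K_def mem_box_cart)
  have outside: "w (t,x) < 0" if pd: "(t,x) \<in> par_dom" and nk: "(t,x) \<notin> K" for t x
  proof -
    have pd': "0 < t" "t \<le> 1" "\<And>j. -1 < x$j \<and> x$j < 1" using pd par_dom_iff by auto
    have "x \<in> closed_cube" using pd' by (auto simp: closed_cube_def less_imp_le)
    then have uM: "u t x \<le> M" using M[of t x] pd' by auto
    have "M' \<le> vb b t x"
    proof (cases "t < \<delta>")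
      case True
      have "sqrt t \<le> sqrt (4/M'^2)" using True \<delta> by simp
      also have "\<dots> = 2/M'" using M'pos by (simp add: real_sqrt_divide)
      finally have "sqrt t \<le> 2 / M'" .
      then have "M' \<le> 2 / sqrt t" using M'pos pd' by (simp add: field_simps)
      then show ?thesis using vb_ge(1)[OF pd b] by linarith
    next
      case False
      have "\<not> (\<forall>j. -1+\<delta> \<le> x$j \<and> x$j \<le> 1-\<delta>)" using nk pd' False Kiff[of t x] by simp
      then obtain j where "\<not> (-1+\<delta> \<le> x$j \<and> x$j \<le> 1-\<delta>)" by blast
      then have j: "x$j < -1+\<delta> \<or> 1-\<delta> < x$j" by linarith
      then show ?thesis
      proof
        assume a: "x$j < -1+\<delta>"
        have "1 + x$j \<le> 2/M'" using a \<delta> by linarith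
        then have "M' \<le> 2/(1+x$j)" using M'pos pd'(3)[of j] by (simp add: field_simps)
        then show ?thesis using vb_ge(3)[OF pd b, of j] by linarith
      next
        assume a: "1-\<delta> < x$j"
        have "1 - x$j \<le> 2/M'" using a \<delta> by linarith
        then have "M' \<le> 2/(1-x$j)" using M'pos pd'(3)[of j] by (simp add: field_simps)
        then show ?thesis using vb_ge(2)[OF pd b, of j] by linarith
      qed
    qed
    then show ?thesis using uM by (simp add: w_def M'_def)
  qed
  have Ksub: "K \<subseteq> par_dom"
  proof
    fix p assume "p \<in> K"
    then obtain t x where p: "p = (t,x)" "(t,x) \<in> K" by (cases p) auto
    have A: "\<delta> \<le> t" "t \<le> 1" "\<And>j. -1+\<delta> \<le> x$j \<and> x$j \<le> 1-\<delta>" using p Kiff by auto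
    have "(t,x) \<in> par_dom" unfolding par_dom_iff
    proof (intro conjI allI)
      show "0 < t" using A \<delta> by linarith
      show "t \<le> 1" using A by simp
      fix j
      show "-1 < x$j" "x$j < 1" using A(3)[of j] \<delta>(1) by linarith+
    qed
    then show "p \<in> par_dom" using p by simp
  qed
  have Kc: "compact K" by (simp add: K_def compact_Times)
  have Kne: "K \<noteq> {}"
  proof -
    have "(1, 0) \<in> K" using \<delta> Kiff by auto
    then show ?thesis by blast
  qed
  have wc: "continuous_on K w"
  proof -
    have K2: "K \<subseteq> {0..1} \<times> closed_cube"
      using Ksub by (force simp: par_dom_iff closed_cube_def less_imp_le)
    have c1: "continuous_on K (\<lambda>p. u (fst p) (snd p))"
      using continuous_on_subset[OF cont K2] by (simp add: case_prod_beta')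
    have pos: "\<And>p. p \<in> K \<Longrightarrow> 0 < fst p \<and> (\<forall>j. -1 < snd p $ j \<and> snd p $ j < 1)"
      using Ksub by (force simp: par_dom_iff)
    have nz: "\<And>p j. p \<in> K \<Longrightarrow> 1 - snd p $ j \<noteq> 0 \<and> 1 + snd p $ j \<noteq> 0 \<and> sqrt (fst p) \<noteq> 0"
    proof -
      fix p j assume "p \<in> K"
      from pos[OF this] have "0 < fst p" "-1 < snd p $ j" "snd p $ j < 1" by auto
      then show "1 - snd p $ j \<noteq> 0 \<and> 1 + snd p $ j \<noteq> 0 \<and> sqrt (fst p) \<noteq> 0" by auto
    qed
    have c2: "continuous_on K (\<lambda>p. vb b (fst p) (snd p))"
      unfolding vb_def hh_def
      apply (intro continuous_intros)
      using nz by auto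
    show ?thesis unfolding w_def by (intro continuous_intros c1 c2)
  qed
  obtain p0 where p0: "p0 \<in> K" "\<forall>y\<in>K. w y \<le> w p0"
    using continuous_attains_sup[OF Kc Kne wc] by blast
  obtain t0 x0 where p0eq: "p0 = (t0, x0)" by (cases p0)
  have w1: "0 < w (t1,x1)" using gt by (simp add: w_def)
  have "(t1,x1) \<in> K" using outside[OF p1] w1 by force
  then have w0: "0 < w (t0,x0)" using p0 w1 p0eq by force
  have gmax: "w (t,x) \<le> w (t0,x0)" if "(t,x) \<in> par_dom" for t x
  proof (cases "(t,x) \<in> K")
    case True then show ?thesis using p0 p0eq by auto
  next
    case False then show ?thesis using outside[OF that] w0 by simp
  qed
  have pd0: "(t0,x0) \<in> par_dom" using p0 p0eq Ksub by auto
  have pd0': "0 < t0" "t0 \<le> 1" "\<And>j. -1 < x0$j \<and> x0$j < 1" using pd0 par_dom_iff by auto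
  have tder: "0 \<le> ut t0 x0 + 1/(t0 * sqrt t0)"
  proof -
    have "((\<lambda>s. u s x0 - 2 / sqrt s) has_real_derivative ut t0 x0 - (- 1/(t0 * sqrt t0))) (at t0 within {0<..1})"
      by (intro DERIV_diff dt[OF pd0] has_field_derivative_at_within[OF sqrt_deriv[OF pd0'(1)]])
    then have "0 \<le> ut t0 x0 - (- 1/(t0 * sqrt t0))"
    proof (rule time_lemma[OF _ pd0'(1,2)], intro allI impI)
      fix s :: real assume s: "0 < s \<and> s \<le> 1"
      then have "(s,x0) \<in> par_dom" using pd0' par_dom_iff by auto
      from gmax[OF this] show "u s x0 - 2 / sqrt s \<le> u t0 x0 - 2 / sqrt t0"
        by (simp add: w_def vb_def)
    qed
    then show ?thesis by simp
  qed
  have sder: "D2u t0 x0 $ i $ i \<le> hh2 (x0$i)" for i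
  proof -
    define e :: "real^3" where "e = axis i 1"
    have ej: "\<And>s j. (x0 + s *\<^sub>R e) $ j = x0$j + (if j = i then s else 0)"
      by (simp add: e_def axis_def)
    define r where "r = min (1 - x0$i) (1 + x0$i)"
    have r: "r > 0" using pd0'(3)[of i] by (simp add: r_def)
    have inpd: "(t0, x0 + s *\<^sub>R e) \<in> par_dom" if "\<bar>s\<bar> < r" for s
      using that pd0' unfolding par_dom_iff ej r_def by (auto split: if_splits)
    have path: "((\<lambda>s. x0 + s *\<^sub>R e) has_derivative (\<lambda>h. h *\<^sub>R e)) (at s)" for s
      by (rule derivative_eq_intros refl)+ simp
    have hhs: "((\<lambda>s. hh (x0$i + s)) has_real_derivative hh1 (x0$i + s)) (at s)"
      if "\<bar>s\<bar> < r" for s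
    proof -
      have y: "-1 < x0$i + s" "x0$i + s < 1" using that r_def by auto
      have g: "((\<lambda>s. x0$i + s) has_real_derivative 0 + 1) (at s)" by (intro DERIV_add DERIV_const DERIV_ident)
      from DERIV_chain2[OF hh_deriv[OF y] g] show ?thesis by simp
    qed
    have d1: "((\<lambda>s. u t0 (x0 + s *\<^sub>R e) - hh (x0$i + s)) has_real_derivative
               (Du t0 (x0 + s *\<^sub>R e) \<bullet> e - hh1 (x0$i + s))) (at s)" if "\<bar>s\<bar> < r" for s
    proof (rule DERIV_diff[OF _ hhs[OF that]])
      have "((\<lambda>s. u t0 (x0 + s *\<^sub>R e)) has_derivative (\<lambda>h. Du t0 (x0 + s *\<^sub>R e) \<bullet> (h *\<^sub>R e))) (at s)"
        by (rule has_derivative_compose[OF path dx[OF inpd[OF that]]])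
      then show "((\<lambda>s. u t0 (x0 + s *\<^sub>R e)) has_real_derivative Du t0 (x0 + s *\<^sub>R e) \<bullet> e) (at s)"
        unfolding has_field_derivative_def
        by (rule has_derivative_eq_rhs) (auto simp: mult.commute)
    qed
    have d2: "((\<lambda>s. Du t0 (x0 + s *\<^sub>R e) \<bullet> e - hh1 (x0$i + s)) has_real_derivative
               (D2u t0 x0 $ i $ i - hh2 (x0$i))) (at 0)"
    proof (rule DERIV_diff)
      have "((\<lambda>s. Du t0 (x0 + s *\<^sub>R e)) has_derivative (\<lambda>h. D2u t0 x0 *v (h *\<^sub>R e))) (at 0)"
        using has_derivative_compose[OF path[of 0], of "\<lambda>y. Du t0 y"] dxx[OF pd0] by simp
      then have "((\<lambda>s. Du t0 (x0 + s *\<^sub>R e) \<bullet> e) has_derivative (\<lambda>h. (D2u t0 x0 *v (h *\<^sub>R e)) \<bullet> e)) (at 0)"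
        by (rule has_derivative_inner_left)
      then show "((\<lambda>s. Du t0 (x0 + s *\<^sub>R e) \<bullet> e) has_real_derivative D2u t0 x0 $ i $ i) (at 0)"
        unfolding has_field_derivative_def
        by (rule has_derivative_eq_rhs)
          (rule ext, simp add: e_def inner_axis, simp add: matrix_vector_mult_def axis_def if_distrib mult.commute cong: if_cong)
    next
      have y: "-1 < x0$i + 0" "x0$i + 0 < 1" using pd0' by auto
      have g: "((\<lambda>s. x0$i + s) has_real_derivative 0 + 1) (at 0)" by (intro DERIV_add DERIV_const DERIV_ident)
      from DERIV_chain2[OF hh1_deriv[OF y] g]
      show "((\<lambda>s. hh1 (x0$i + s)) has_real_derivative hh2 (x0$i)) (at 0)" by simp
    qed
    have mx: "u t0 (x0 + s *\<^sub>R e) - hh (x0$i + s) \<le> u t0 (x0 + 0 *\<^sub>R e) - hh (x0$i + 0)"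
      if "\<bar>s\<bar> < r" for s
    proof -
      have "(\<Sum>j\<in>UNIV. hh ((x0 + s *\<^sub>R e)$j)) - (\<Sum>j\<in>UNIV. hh (x0$j))
          = (\<Sum>j\<in>UNIV. (if j = i then hh (x0$i + s) - hh (x0$i) else 0))"
        unfolding sum_subtractf[symmetric] by (rule sum.cong) (auto simp: e_def axis_def)
      also have "\<dots> = hh (x0$i + s) - hh (x0$i)" by simp
      finally have S: "(\<Sum>j\<in>UNIV. hh ((x0 + s *\<^sub>R e)$j)) = (\<Sum>j\<in>UNIV. hh (x0$j)) + hh (x0$i + s) - hh (x0$i)"
        by simp
      from gmax[OF inpd[OF that]]
      have "u t0 (x0 + s *\<^sub>R e) - (2 / sqrt t0 + (\<Sum>j\<in>UNIV. hh ((x0 + s *\<^sub>R e)$j)) + b)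
         \<le> u t0 x0 - (2 / sqrt t0 + (\<Sum>j\<in>UNIV. hh (x0$j)) + b)"
        by (simp only: w_def vb_def fst_conv snd_conv)
      then show ?thesis unfolding S by (simp only: scale_zero_left add_0_right)
    qed
    have "D2u t0 x0 $ i $ i - hh2 (x0$i) \<le> 0"
      by (rule second_lemma[OF r d1 d2 mx])
    then show ?thesis by simp
  qed
  have "ut t0 x0 - (\<Sum>i\<in>UNIV. D2u t0 x0 $ i $ i) \<ge> - 1/(t0 * sqrt t0) - (\<Sum>i\<in>UNIV. hh2 (x0$i))"
    using tder sum_mono[of UNIV "\<lambda>i. D2u t0 x0 $ i $ i" "\<lambda>i. hh2 (x0$i)"] sder by force
  with eq[OF pd0] have up: "(u t0 x0)^3 \<le> 1/(t0 * sqrt t0) + (\<Sum>i\<in>UNIV. hh2 (x0$i)) + b^3"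
    by linarith
  define V where "V = vb b t0 x0"
  have Vpos: "0 < V" using vb_ge(4)[OF pd0 b] by (simp add: V_def)
  have uV: "V < u t0 x0" using w0 by (simp add: w_def V_def)
  have "V^3 < (u t0 x0)^3" using Vpos uV by (simp add: power_strict_mono)
  moreover have "1/(t0 * sqrt t0) + (\<Sum>i\<in>UNIV. hh2 (x0$i)) + b^3 \<le> V^3"
  proof -
    have hp: "\<And>j. 0 \<le> hh (x0$j)" using hh_facts(3) pd0'(3) by (meson less_le)
    have S0: "0 \<le> (\<Sum>j\<in>UNIV. hh (x0$j))" by (simp add: hp sum_nonneg)
    have st: "0 \<le> 2 / sqrt t0" using pd0' by simp
    have "(2 / sqrt t0)^3 + ((\<Sum>j\<in>UNIV. hh (x0$j))^3 + b^3) \<le> V^3"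
    proof -
      have "(\<Sum>j\<in>UNIV. hh (x0$j))^3 + b^3 \<le> ((\<Sum>j\<in>UNIV. hh (x0$j)) + b)^3"
        using S0 b by (rule cube_sup)
      moreover have "(2 / sqrt t0)^3 + ((\<Sum>j\<in>UNIV. hh (x0$j)) + b)^3 \<le> V^3"
        unfolding V_def vb_def using st S0 b cube_sup[of "2 / sqrt t0" "(\<Sum>j\<in>UNIV. hh (x0$j)) + b"]
        by (simp add: add.assoc)
      ultimately show ?thesis by linarith
    qed
    moreover have "(\<Sum>i\<in>UNIV. hh2 (x0$i)) \<le> (\<Sum>j\<in>UNIV. hh (x0$j))^3"
    proof -
      have "(\<Sum>i\<in>UNIV. hh2 (x0$i)) \<le> (\<Sum>i\<in>UNIV. (hh (x0$i))^3)"
        by (rule sum_mono) (use hh_facts(4) pd0'(3) in auto)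
      also have "\<dots> \<le> (\<Sum>j\<in>UNIV. hh (x0$j))^3"
        by (rule sum_cube) (auto simp: hp)
      finally show ?thesis .
    qed
    moreover have "1/(t0 * sqrt t0) \<le> (2 / sqrt t0)^3"
    proof -
      have s: "sqrt t0 * sqrt t0 = t0" using pd0' by simp
      have "(2 / sqrt t0)^3 = 8 / (sqrt t0 * sqrt t0 * sqrt t0)"
        by (simp add: power3_eq_cube)
      also have "\<dots> = 8 / (t0 * sqrt t0)" by (simp only: s)
      finally have e8: "(2 / sqrt t0)^3 = 8 / (t0 * sqrt t0)" .
      have "0 \<le> t0 * sqrt t0" using pd0' by simp
      from divide_right_mono[of 1 8, OF _ this] show ?thesis unfolding e8 by simp
    qed
    ultimately show ?thesis by linarith
  qed
  ultimately show False using up by linarith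
qed



lemma neg_mat_vec: "(- (A::real^3^3)) *v h = - (A *v h)"
  by (simp add: vec_eq_iff matrix_vector_mult_def sum_negf)

lemma pdist_facts:
  assumes "(t,x) \<in> par_dom"
  shows "0 < pdist t x" "pdist t x \<le> sqrt t" "\<And>j. pdist t x \<le> 1 - x$j" "\<And>j. pdist t x \<le> 1 + x$j"
proof -
  let ?S = "insert (sqrt t) ((\<lambda>i. 1 - x$i) ` UNIV \<union> (\<lambda>i. 1 + x$i) ` UNIV)"
  have fin: "finite ?S" by simp
  have pd: "0 < t" "\<And>j. -1 < x$j \<and> x$j < 1" using assms par_dom_iff by auto
  have pos: "\<forall>y\<in>?S. 0 < y"
  proof
    fix y assume "y \<in> ?S"
    then consider "y = sqrt t" | i where "y = 1 - x$i" | i where "y = 1 + x$i" by blast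
    then show "0 < y"
    proof cases
      case 1 then show ?thesis using pd by simp
    next
      case (2 i) then show ?thesis using pd(2)[of i] by simp
    next
      case (3 i) then show ?thesis using pd(2)[of i] by simp
    qed
  qed
  have "pdist t x \<in> ?S" unfolding pdist_def by (rule Min_in[OF fin]) simp
  then show "0 < pdist t x" using pos by blast
  show "pdist t x \<le> sqrt t" unfolding pdist_def by (rule Min_le[OF fin]) simp
  fix j
  show "pdist t x \<le> 1 - x$j" unfolding pdist_def by (rule Min_le[OF fin]) simp
  show "pdist t x \<le> 1 + x$j" unfolding pdist_def by (rule Min_le[OF fin]) simp
qed

lemma vb_bound:
  assumes "(t,x) \<in> par_dom" "0 \<le> b"
  shows "vb b t x \<le> 15 * max (1 / pdist t x) b"
proof -
  define d where "d = pdist t x"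
  note pf = pdist_facts[OF assms(1), folded d_def]
  have pd: "0 < t" "\<And>j. -1 < x$j \<and> x$j < 1" using assms par_dom_iff by auto
  have a: "2 / sqrt t \<le> 2 / d" using pf pd by (intro divide_left_mono) auto
  have h: "hh (x$j) \<le> 4 / d" for j
  proof -
    have "2/(1-x$j) \<le> 2/d" using pf(1) pf(3)[of j] by (intro divide_left_mono) auto
    moreover have "2/(1+x$j) \<le> 2/d" using pf(1) pf(4)[of j] by (intro divide_left_mono) auto
    ultimately show ?thesis unfolding hh_def by simp
  qed
  have "(\<Sum>j\<in>UNIV. hh (x$j)) \<le> of_nat (card (UNIV::3 set)) * (4/d)"
    by (rule sum_bounded_above) (use h in auto)
  then have s: "(\<Sum>j\<in>UNIV. hh (x$j)) \<le> 12/d" by simp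
  have "vb b t x \<le> 14 * (1/d) + b" using a s unfolding vb_def by simp
  moreover have "1/d \<le> max (1/d) b" "b \<le> max (1/d) b" by auto
  ultimately show ?thesis unfolding d_def by linarith
qed



theorem lemma2p7:
  shows "\<exists>C::real. \<forall>u ut Du D2u g.
     is_sol u ut Du D2u g \<and> g_bounded g \<longrightarrow>
     (\<forall>t x. (t, x) \<in> par_dom \<longrightarrow>
        \<bar>u t x\<bar> \<le> C * max (1 / pdist t x) (gnorm g powr (1/3)))"
proof (intro exI allI impI)
  fix u ut Du D2u g t x
  assume H: "is_sol u ut Du D2u g \<and> g_bounded g" and p: "(t, x) \<in> par_dom"
  define G where "G = gnorm g"
  define b where "b = G powr (1/3)"
  have gle: "\<bar>g a s y\<bar> \<le> G" for a s y
  proof -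
    obtain M where M: "\<forall>a t x. \<bar>g a t x\<bar> \<le> M" using H unfolding g_bounded_def by blast
    have "bdd_above ((\<lambda>p. \<bar>g (fst p) (fst (snd p)) (snd (snd p))\<bar>) ` UNIV)"
      using M by (auto intro!: bdd_aboveI)
    from cSUP_upper[OF _ this, of "(a,s,y)"] show ?thesis by (simp add: G_def gnorm_def)
  qed
  have G0: "0 \<le> G" using gle[of 0 0 0] by linarith
  have b0: "0 \<le> b" by (simp add: b_def)
  have b3: "b^3 = G"
  proof (cases "G = 0")
    case True then show ?thesis by (simp add: b_def)
  next
    case False
    then have Gp: "0 < G" using G0 by simp
    have "b^3 = b powr (real 3)" using Gp by (simp add: b_def powr_realpow)
    also have "\<dots> = G" using G0 by (simp add: b_def powr_powr)
    finally show ?thesis .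
  qed
  have sol: "continuous_on ({0..1} \<times> closed_cube) (\<lambda>(t,x). u t x)"
    "\<And>t x. (t,x) \<in> par_dom \<Longrightarrow> ((\<lambda>s. u s x) has_real_derivative ut t x) (at t within {0<..1})"
    "\<And>t x. (t,x) \<in> par_dom \<Longrightarrow> ((\<lambda>y. u t y) has_derivative (\<lambda>h. Du t x \<bullet> h)) (at x)"
    "\<And>t x. (t,x) \<in> par_dom \<Longrightarrow> ((\<lambda>y. Du t y) has_derivative (\<lambda>h. D2u t x *v h)) (at x)"
    "\<And>t x. (t,x) \<in> par_dom \<Longrightarrow> ut t x - (\<Sum>i\<in>UNIV. D2u t x $ i $ i) = - ((u t x) ^ 3) + g (u t x) t x"
    using H unfolding is_sol_def by fast+
  have up: "u t x \<le> vb b t x"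
  proof (rule core[OF sol(1-4) _ b0 p])
    fix t x assume "(t,x) \<in> par_dom"
    then show "ut t x - (\<Sum>i\<in>UNIV. D2u t x $ i $ i) \<le> - ((u t x)^3) + b^3"
      using sol(5) gle[of "u t x" t x] b3 by fastforce
  qed
  have lo: "- u t x \<le> vb b t x"
  proof (rule core[where u="\<lambda>t x. - u t x" and ut="\<lambda>t x. - ut t x" and Du="\<lambda>t x. - Du t x"
        and D2u="\<lambda>t x. - D2u t x", OF _ _ _ _ _ b0 p])
    have "continuous_on ({0..1} \<times> closed_cube) (\<lambda>p. - (case p of (t,x) \<Rightarrow> u t x))"
      by (intro continuous_on_minus sol(1))
    moreover have "(\<lambda>p. - (case p of (t,x) \<Rightarrow> u t x)) = (\<lambda>(t,x). - u t x)" by auto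
    ultimately show "continuous_on ({0..1} \<times> closed_cube) (\<lambda>(t,x). - u t x)" by metis
  next
    fix t x assume q: "(t,x) \<in> par_dom"
    show "((\<lambda>s. - u s x) has_real_derivative - ut t x) (at t within {0<..1})"
      by (rule DERIV_minus[OF sol(2)[OF q]])
    show "((\<lambda>y. - u t y) has_derivative (\<lambda>h. (- Du t x) \<bullet> h)) (at x)"
      by (rule has_derivative_eq_rhs[OF has_derivative_minus[OF sol(3)[OF q]]]) simp
    show "((\<lambda>y. - Du t y) has_derivative (\<lambda>h. (- D2u t x) *v h)) (at x)"
      by (rule has_derivative_eq_rhs[OF has_derivative_minus[OF sol(4)[OF q]]]) (simp add: neg_mat_vec)
    have "- ut t x - (\<Sum>i\<in>UNIV. (- D2u t x) $ i $ i) = - (ut t x - (\<Sum>i\<in>UNIV. D2u t x $ i $ i))"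
      by (simp add: sum_negf)
    also have "\<dots> = (u t x)^3 - g (u t x) t x" using sol(5)[OF q] by simp
    also have "\<dots> \<le> - ((- u t x)^3) + b^3" using gle[of "u t x" t x] b3 by simp
    finally show "- ut t x - (\<Sum>i\<in>UNIV. (- D2u t x) $ i $ i) \<le> - ((- u t x)^3) + b^3" .
  qed
  have "\<bar>u t x\<bar> \<le> vb b t x" using up lo by linarith
  also have "\<dots> \<le> 15 * max (1 / pdist t x) b" by (rule vb_bound[OF p b0])
  finally show "\<bar>u t x\<bar> \<le> 15 * max (1 / pdist t x) (gnorm g powr (1/3))" by (simp add: b_def G_def)
qed

end
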